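(* Let $q \equiv 1 \pmod{14}$ be a prime power, let $\rho$ be a primitive element of $\mathbb F_q$, let $c \equiv 1 \pmod 4$ be a positive integer, and let $l = (3c+1)/4$. Suppose that $c = c^7_q(1,5)$ (respectively $c = c^7_q(1,3)$) and set $\Gamma = \operatorname{Cay}(G_{l,3,q},S(\pi))$ where $\pi = \Psi_1$ (respectively $\pi=\Psi_2$). Then $\Gamma$ is edge-regular with parameters $(8lq,\ 8l-2+q,\ 8l-2)$ and has a regular clique of order $8l$.
   Context: For an additive group $A$, $A^*=A\setminus\{0\}$. $G_{l,3,q} = \mathbb Z_l\oplus\mathbb Z_2^3\oplus\mathbb F_q$. $S_0=\{(g,0): g\in(\mathbb Z_l\oplus\mathbb Z_2^3)^*\}$; for a bijection $\pi:(\mathbb Z_2^3)^*\to\mathbb Z_7$ and $z\in(\mathbb Z_2^3)^*$, $S_{z,\pi}=\{(0,z,\rho^j): j\in\mathbb Z,\ j\equiv\pi(z)\pmod 7\}$; $S(\pi)=S_0\cup\bigcup_z S_{z,\pi}$; $\operatorname{Cay}(G_{l,3,q},S(\pi))$ has vertex set $G_{l,3,q}$ with $x\sim y$ iff $y-x\in S(\pi)$. Elements of $\mathbb Z_2^3$ are written $(x_2,x_1,x_0)$, $\hat x\in\{0,1\}$ is the integer representative of $x\in\mathbb Z_2$; $\phi(x_2,x_1,x_0)=\hat x_0+2\hat x_1+4\hat x_2\pmod 7$, $\operatorname{wt}(x_2,x_1,x_0)=\hat x_0+\hat x_1+\hat x_2$, $\sigma_+(x_2,x_1,x_0)=(x_1,x_0,x_2)$,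 $\sigma_-(x_2,x_1,x_0)=(x_0,x_2,x_1)$; $\Psi_1(\mathbf x)=\phi(\sigma_+(\mathbf x))$ for odd weight, $\phi(\sigma_-(\mathbf x))$ for even weight; $\Psi_2(\mathbf x)=\phi(\sigma_+(\mathbf x)+\mathbf x)$ for odd weight, $\phi((1,1,1)+\mathbf x)$ for even weight. Write $q=14r+1$; $C^7_q(i)=\{\rho^{7j+i}:0\le j\le 2r-1\}$, $c^7_q(a,b)=|(C^7_q(a)+1)\cap C^7_q(b)|$. A graph is edge-regular with parameters $(N,k,\lambda)$ if it is non-empty, has $N$ vertices, is $k$-regular, and every two adjacent vertices have exactly $\lambda$ common neighbours. A clique $\mathcal C$ is regular if every vertex outside $\mathcal C$ is adjacent to the same number $e>0$ of vertices of $\mathcal C$. *)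

theory Defs
  imports Main "HOL-Library.Cardinality"
begin

text \<open>Elements of Z_2^3 are triples (x2, x1, x0) of booleans (True = 1).\<close>
type_synonym z2_3 = "bool \<times> bool \<times> bool"

fun z2add :: "z2_3 \<Rightarrow> z2_3 \<Rightarrow> z2_3" where
  "z2add (a2, a1, a0) (b2, b1, b0) = (a2 \<noteq> b2, a1 \<noteq> b1, a0 \<noteq> b0)"

definition z2zero :: z2_3 where "z2zero = (False, False, False)"

fun phi :: "z2_3 \<Rightarrow> nat" where
  "phi (x2, x1, x0) = (of_bool x0 + 2 * of_bool x1 + 4 * of_bool x2) mod 7"

fun wt :: "z2_3 \<Rightarrow> nat" where
  "wt (x2, x1, x0) = of_bool x0 + of_bool x1 + of_bool x2"

fun sigma_plus :: "z2_3 \<Rightarrow> z2_3" where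
  "sigma_plus (x2, x1, x0) = (x1, x0, x2)"

fun sigma_minus :: "z2_3 \<Rightarrow> z2_3" where
  "sigma_minus (x2, x1, x0) = (x0, x2, x1)"

definition Psi1 :: "z2_3 \<Rightarrow> nat" where
  "Psi1 x = (if odd (wt x) then phi (sigma_plus x) else phi (sigma_minus x))"

definition Psi2 :: "z2_3 \<Rightarrow> nat" where
  "Psi2 x = (if odd (wt x) then phi (z2add (sigma_plus x) x)
             else phi (z2add (True, True, True) x))"

text \<open>Vertices of G_{l,3,q} = Z_l + Z_2^3 + F_q: Z_l represented by {0..<l}.\<close>
definition Gcar :: "nat \<Rightarrow> (nat \<times> z2_3 \<times> 'a) set" where
  "Gcar l = {0..<l} \<times> UNIV \<times> UNIV"

fun gdiff :: "nat \<Rightarrow> nat \<times> z2_3 \<times> 'a::ab_group_add \<Rightarrow> nat \<times> z2_3 \<times> 'a \<Rightarrow> nat \<times> z2_3 \<times> 'a" where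
  "gdiff l (a, z, x) (b, w, y) = ((b + l - a) mod l, z2add w z, y - x)"

definition S0 :: "nat \<Rightarrow> (nat \<times> z2_3 \<times> 'a::zero) set" where
  "S0 l = {(a, z, 0) | a z. a < l \<and> (a, z) \<noteq> (0, z2zero)}"

definition Sz :: "'a::field \<Rightarrow> (z2_3 \<Rightarrow> nat) \<Rightarrow> z2_3 \<Rightarrow> (nat \<times> z2_3 \<times> 'a) set" where
  "Sz \<rho> \<pi> z = {(0, z, \<rho> ^ j) | j. j mod 7 = \<pi> z mod 7}"

definition Sset :: "nat \<Rightarrow> 'a::field \<Rightarrow> (z2_3 \<Rightarrow> nat) \<Rightarrow> (nat \<times> z2_3 \<times> 'a) set" where
  "Sset l \<rho> \<pi> = S0 l \<union> (\<Union>z \<in> UNIV - {z2zero}. Sz \<rho> \<pi> z)"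

definition cay_adj :: "nat \<Rightarrow> 'a::field \<Rightarrow> (z2_3 \<Rightarrow> nat) \<Rightarrow> nat \<times> z2_3 \<times> 'a \<Rightarrow> nat \<times> z2_3 \<times> 'a \<Rightarrow> bool" where
  "cay_adj l \<rho> \<pi> u v \<longleftrightarrow> gdiff l u v \<in> Sset l \<rho> \<pi>"

definition primitive_element :: "'a::field \<Rightarrow> bool" where
  "primitive_element \<rho> \<longleftrightarrow> \<rho> \<noteq> 0 \<and> (\<forall>x. x \<noteq> 0 \<longrightarrow> (\<exists>j::nat. x = \<rho> ^ j))"

text \<open>Cyclotomic classes of order 7, q = 14 r + 1.\<close>
definition cyc_class :: "'a::field \<Rightarrow> nat \<Rightarrow> nat \<Rightarrow> 'a set" where
  "cyc_class \<rho> r i = {\<rho> ^ (7 * j + i) | j. j \<le> 2 * r - 1}"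

definition cyc_num :: "'a::field \<Rightarrow> nat \<Rightarrow> nat \<Rightarrow> nat \<Rightarrow> nat" where
  "cyc_num \<rho> r a b = card ((\<lambda>x. x + 1) ` cyc_class \<rho> r a \<inter> cyc_class \<rho> r b)"

definition edge_regular :: "'v set \<Rightarrow> ('v \<Rightarrow> 'v \<Rightarrow> bool) \<Rightarrow> nat \<Rightarrow> nat \<Rightarrow> nat \<Rightarrow> bool" where
  "edge_regular V adj N k lam \<longleftrightarrow>
     finite V \<and>
     (\<forall>u\<in>V. \<forall>v\<in>V. adj u v \<longleftrightarrow> adj v u) \<and> (\<forall>v\<in>V. \<not> adj v v) \<and>
     (\<exists>u\<in>V. \<exists>v\<in>V. adj u v) \<and>
     card V = N \<and>
     (\<forall>v\<in>V. card {w\<in>V. adj v w} = k) \<and>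
     (\<forall>u\<in>V. \<forall>v\<in>V. adj u v \<longrightarrow> card {w\<in>V. adj u w \<and> adj v w} = lam)"

definition regular_clique :: "'v set \<Rightarrow> ('v \<Rightarrow> 'v \<Rightarrow> bool) \<Rightarrow> 'v set \<Rightarrow> bool" where
  "regular_clique V adj C \<longleftrightarrow>
     C \<subseteq> V \<and> (\<forall>u\<in>C. \<forall>v\<in>C. u \<noteq> v \<longrightarrow> adj u v) \<and>
     (\<exists>e>0. \<forall>v\<in>V - C. card {w\<in>C. adj v w} = e)"

end

theory Submission
  imports Defs
begin



lemma a1: "(c::nat) < 7 \<Longrightarrow> d < 7 \<Longrightarrow> ((c + d) mod 7 + 7 - d) mod 7 = c" by (auto simp: mod_if)
lemma a2: "(A::nat) < 7 \<Longrightarrow> k < 7 \<Longrightarrow> ((A + 7 - k) mod 7 + k) mod 7 = A" by (auto simp: mod_if)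
lemma a3: "(a::nat) < 7 \<Longrightarrow> (7 - (7 - a) mod 7) mod 7 = a" by (auto simp: mod_if)
lemma a4: "(a::nat) < 7 \<Longrightarrow> b < 7 \<Longrightarrow> ((b + 7 - a) mod 7 + 7 - (7 - a) mod 7) mod 7 = b" by (auto simp: mod_if)
lemma a5: "(m::nat) mod 7 = k \<Longrightarrow> m = 7 * (m div 7) + k" using div_mult_mod_eq[of m 7] by simp

locale prim =
  fixes \<rho> :: "'a::{finite,field}"
  assumes q14: "CARD('a) mod 14 = 1" and prim: "primitive_element \<rho>"
begin

definition nn :: nat where "nn = CARD('a) - 1"

lemma rho_nz[simp]: "\<rho> \<noteq> 0" using prim by (simp add: primitive_element_def)

lemma pow_nz[simp]: "\<rho> ^ j \<noteq> 0" using rho_nz by simp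

lemma card_nz: "card (UNIV - {0::'a}) = nn"
  by (simp add: nn_def card_Diff_subset)

lemma q_ge: "CARD('a) \<ge> 15"
proof -
  have "CARD('a) \<ge> 2"
  proof -
    have "{0::'a, 1} \<subseteq> UNIV" by simp
    hence "card {0::'a,1} \<le> CARD('a)" by (intro card_mono) auto
    thus ?thesis by simp
  qed
  thus ?thesis using q14 by presburger
qed

lemma nn_eq: "nn = 14 * (nn div 14)" using q14 q_ge unfolding nn_def by presburger

lemma exists_period: "\<exists>d. 0 < d \<and> d \<le> nn \<and> \<rho> ^ d = 1"
proof -
  have "(\<lambda>i. \<rho> ^ i) ` {..nn} \<subseteq> UNIV - {0}" using rho_nz by auto
  hence "card ((\<lambda>i. \<rho> ^ i) ` {..nn}) \<le> nn"
    using card_mono[of "UNIV - {0::'a}"] card_nz by (metis finite)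
  hence "\<not> inj_on (\<lambda>i. \<rho> ^ i) {..nn}"
    using card_image by fastforce
  then obtain i j where ij: "i \<le> nn" "j \<le> nn" "i \<noteq> j" "\<rho> ^ i = \<rho> ^ j"
    unfolding inj_on_def by auto
  { fix i j :: nat assume "i < j" "j \<le> nn" "\<rho> ^ i = \<rho> ^ j"
    have e: "\<rho> ^ j = \<rho> ^ i * \<rho> ^ (j - i)" using \<open>i < j\<close>
      by (simp add: power_add[symmetric])
    hence "\<rho> ^ i * \<rho> ^ (j - i) = \<rho> ^ i * 1" using \<open>\<rho> ^ i = \<rho> ^ j\<close> by simp
    hence "\<rho> ^ (j - i) = 1" by (simp add: rho_nz)
    hence ?thesis using \<open>i < j\<close> \<open>j \<le> nn\<close> by (intro exI[of _ "j - i"]) auto }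
  thus ?thesis using ij by (metis linorder_neq_iff)
qed

definition dd :: nat where "dd = (LEAST d. 0 < d \<and> \<rho> ^ d = 1)"

lemma dd_props: "0 < dd" "\<rho> ^ dd = 1" "dd \<le> nn"
proof -
  obtain d where d: "0 < d" "d \<le> nn" "\<rho> ^ d = 1" using exists_period by blast
  have "0 < dd \<and> \<rho> ^ dd = 1" unfolding dd_def by (rule LeastI[of _ d]) (use d in auto)
  thus "0 < dd" "\<rho> ^ dd = 1" by auto
  have "dd \<le> d" unfolding dd_def by (rule Least_le) (use d in auto)
  thus "dd \<le> nn" using d by simp
qed

lemma pow_mod_dd: "\<rho> ^ m = \<rho> ^ (m mod dd)"
proof -
  have "\<rho> ^ m = \<rho> ^ (dd * (m div dd) + m mod dd)" by simp
  also have "\<dots> = (\<rho> ^ dd) ^ (m div dd) * \<rho> ^ (m mod dd)" by (simp only: power_add power_mult)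
  finally show ?thesis using dd_props by simp
qed

lemma dd_inj: "inj_on (\<lambda>i. \<rho> ^ i) {..<dd}"
proof (rule inj_onI, rule ccontr)
  fix i j assume a: "i \<in> {..<dd}" "j \<in> {..<dd}" "\<rho> ^ i = \<rho> ^ j" "i \<noteq> j"
  { fix i j :: nat assume "i < j" "j < dd" "\<rho> ^ i = \<rho> ^ j"
    have e: "\<rho> ^ j = \<rho> ^ i * \<rho> ^ (j - i)" using \<open>i < j\<close>
      by (simp add: power_add[symmetric])
    hence "\<rho> ^ i * \<rho> ^ (j - i) = \<rho> ^ i * 1" using \<open>\<rho> ^ i = \<rho> ^ j\<close> by simp
    hence "\<rho> ^ (j - i) = 1" by (simp add: rho_nz)
    moreover have "j - i < dd" "0 < j - i" using \<open>i < j\<close> \<open>j < dd\<close> by auto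
    ultimately have False using not_less_Least[of "j - i" "\<lambda>d. 0 < d \<and> \<rho> ^ d = 1"]
      unfolding dd_def by auto }
  thus False using a by (metis lessThan_iff linorder_neq_iff)
qed

lemma dd_eq: "dd = nn"
proof -
  have "UNIV - {0} \<subseteq> (\<lambda>i. \<rho> ^ i) ` {..<dd}"
  proof
    fix x :: 'a assume "x \<in> UNIV - {0}"
    then obtain j where "x = \<rho> ^ j" using prim unfolding primitive_element_def by auto
    hence "x = \<rho> ^ (j mod dd)" using pow_mod_dd by simp
    thus "x \<in> (\<lambda>i. \<rho> ^ i) ` {..<dd}" using dd_props by auto
  qed
  hence "nn \<le> card ((\<lambda>i. \<rho> ^ i) ` {..<dd})" using card_nz by (metis card_mono finite_imageI finite_lessThan)
  also have "\<dots> = dd" using dd_inj by (simp add: card_image)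
  finally show ?thesis using dd_props by simp
qed

lemma pow_eq_iff: "\<rho> ^ i = \<rho> ^ j \<longleftrightarrow> i mod nn = j mod nn"
proof
  assume "\<rho> ^ i = \<rho> ^ j"
  hence "\<rho> ^ (i mod nn) = \<rho> ^ (j mod nn)" using pow_mod_dd dd_eq by metis
  thus "i mod nn = j mod nn" using dd_inj dd_eq dd_props unfolding inj_on_def by auto
next
  assume "i mod nn = j mod nn" thus "\<rho> ^ i = \<rho> ^ j" using pow_mod_dd dd_eq by metis
qed


lemma nn7: "7 dvd nn" using nn_eq by presburger

lemma pow_eq_mod7: "\<rho> ^ i = \<rho> ^ j \<Longrightarrow> i mod 7 = j mod 7"
  using pow_eq_iff nn7 by (metis mod_mod_cancel)

definition cl :: "'a \<Rightarrow> nat" where "cl x = (SOME j. x = \<rho> ^ j) mod 7"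

lemma cl_pow[simp]: "cl (\<rho> ^ j) = j mod 7"
proof -
  have "\<rho> ^ j = \<rho> ^ (SOME j'. \<rho> ^ j = \<rho> ^ j')" by (rule someI_ex) auto
  thus ?thesis unfolding cl_def using pow_eq_mod7 by metis
qed

lemma ex_pow: "x \<noteq> 0 \<Longrightarrow> \<exists>j. x = \<rho> ^ j"
  using prim unfolding primitive_element_def by auto

lemma cl_lt[simp]: "cl x < 7" unfolding cl_def by simp

lemma inC_iff: "(\<exists>j. x = \<rho> ^ j \<and> j mod 7 = k mod 7) \<longleftrightarrow> x \<noteq> 0 \<and> cl x = k mod 7"
proof
  assume "\<exists>j. x = \<rho> ^ j \<and> j mod 7 = k mod 7" then show "x \<noteq> 0 \<and> cl x = k mod 7" by (auto simp: rho_nz)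
next
  assume h: "x \<noteq> 0 \<and> cl x = k mod 7"
  then obtain j where "x = \<rho> ^ j" using ex_pow by blast
  with h show "\<exists>j. x = \<rho> ^ j \<and> j mod 7 = k mod 7" by auto
qed

lemma cl_mult: "x \<noteq> 0 \<Longrightarrow> y \<noteq> 0 \<Longrightarrow> cl (x * y) = (cl x + cl y) mod 7"
proof -
  assume "x \<noteq> 0" "y \<noteq> 0"
  then obtain i j where "x = \<rho> ^ i" "y = \<rho> ^ j" using ex_pow by blast
  thus ?thesis by (simp add: power_add[symmetric] mod_add_eq)
qed

lemma h_pos: "nn div 14 \<ge> 1" using q_ge nn_def nn_eq by simp

lemma m1: "-1 = \<rho> ^ (7 * (nn div 14))"
proof -
  define h where "h = nn div 14"
  have hp: "h \<ge> 1" using h_pos h_def by simp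
  have nh: "nn = 14 * h" using nn_eq h_def by simp
  have "(\<rho> ^ (7 * h)) ^ 2 = \<rho> ^ nn" by (simp add: nh power_mult[symmetric] mult.commute)
  also have "\<dots> = \<rho> ^ 0" by (subst pow_eq_iff) simp
  finally have sq: "(\<rho> ^ (7 * h)) ^ 2 = 1" by simp
  have "7 * h mod nn = 7 * h" using hp nh by simp
  hence "\<rho> ^ (7 * h) \<noteq> \<rho> ^ 0" unfolding pow_eq_iff using hp by simp
  hence "\<rho> ^ (7 * h) \<noteq> 1" by simp
  with sq have "\<rho> ^ (7 * h) = -1" using power2_eq_1_iff by blast
  thus ?thesis using h_def by simp
qed

lemma cl_m1[simp]: "cl (-1) = 0" by (subst m1) simp

lemma cl_one[simp]: "cl 1 = 0" using cl_pow[of 0] by simp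

lemma cl_neg: "x \<noteq> 0 \<Longrightarrow> cl (- x) = cl x"
proof -
  assume "x \<noteq> 0"
  hence "cl ((-1) * x) = cl x" by (subst cl_mult) auto
  thus ?thesis by simp
qed

lemma cl_div: "x \<noteq> 0 \<Longrightarrow> y \<noteq> 0 \<Longrightarrow> cl (x / y) = (cl x + 7 - cl y) mod 7"
proof -
  assume a: "x \<noteq> 0" "y \<noteq> 0"
  have "cl x = cl ((x / y) * y)" using a by simp
  also have "\<dots> = (cl (x / y) + cl y) mod 7" using a by (subst cl_mult) auto
  finally have "cl x = (cl (x / y) + cl y) mod 7" .
  thus ?thesis using a1[of "cl (x / y)" "cl y"] by simp
qed

lemma class_img: "k < 7 \<Longrightarrow> {x. x \<noteq> 0 \<and> cl x = k} = (\<lambda>j. \<rho> ^ (7 * j + k)) ` {..<2 * (nn div 14)}"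
proof (rule set_eqI, rule iffI)
  fix x assume k: "k < 7" and "x \<in> {x. x \<noteq> 0 \<and> cl x = k}"
  hence x: "x \<noteq> 0" "cl x = k" by auto
  then obtain m where m: "x = \<rho> ^ m" using ex_pow by blast
  define m' where "m' = m mod nn"
  have "x = \<rho> ^ m'" using m pow_eq_iff m'_def by simp
  hence "m' mod 7 = k" using x by simp
  hence "m' = 7 * (m' div 7) + k" by (rule a5)
  moreover have "0 < nn" using h_pos nn_eq by linarith
  hence "m' < nn" unfolding m'_def by simp
  hence "m' < 2 * (nn div 14) * 7" using nn_eq by linarith
  hence "m' div 7 < 2 * (nn div 14)" by (rule less_mult_imp_div_less)
  ultimately show "x \<in> (\<lambda>j. \<rho> ^ (7 * j + k)) ` {..<2 * (nn div 14)}"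
    using \<open>x = \<rho> ^ m'\<close> by (intro image_eqI[of _ _ "m' div 7"]) auto
next
  fix x assume k: "k < 7" and "x \<in> (\<lambda>j. \<rho> ^ (7 * j + k)) ` {..<2 * (nn div 14)}"
  thus "x \<in> {x. x \<noteq> 0 \<and> cl x = k}" by auto
qed

lemma card_class: "k < 7 \<Longrightarrow> card {x. x \<noteq> 0 \<and> cl x = k} = 2 * (nn div 14)"
proof -
  assume k: "k < 7"
  have "inj_on (\<lambda>j. \<rho> ^ (7 * j + k)) {..<2 * (nn div 14)}"
  proof (rule inj_onI)
    fix i j assume ij: "i \<in> {..<2 * (nn div 14)}" "j \<in> {..<2 * (nn div 14)}"
      and e: "\<rho> ^ (7 * i + k) = \<rho> ^ (7 * j + k)"
    have "7 * i + k < nn" "7 * j + k < nn" using ij k nn_eq by auto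
    with e show "i = j" unfolding pow_eq_iff by simp
  qed
  thus ?thesis using class_img[OF k] by (simp add: card_image)
qed

lemma cyc_class_eq: "k < 7 \<Longrightarrow> cyc_class \<rho> (nn div 14) k = {x. x \<noteq> 0 \<and> cl x = k}"
proof -
  assume k: "k < 7"
  have "cyc_class \<rho> (nn div 14) k = (\<lambda>j. \<rho> ^ (7 * j + k)) ` {..<2 * (nn div 14)}"
    unfolding cyc_class_def using h_pos by (auto simp: less_Suc_eq_le[symmetric])
  thus ?thesis using class_img[OF k] by simp
qed

definition cn :: "nat \<Rightarrow> nat \<Rightarrow> nat" where
  "cn a b = card {x. x \<noteq> 1 \<and> x \<noteq> 0 \<and> cl (x - 1) = a mod 7 \<and> cl x = b mod 7}"

lemma cyc_num_eq: "a < 7 \<Longrightarrow> b < 7 \<Longrightarrow> cyc_num \<rho> (nn div 14) a b = cn a b"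
proof -
  assume ab: "a < 7" "b < 7"
  have "(\<lambda>x. x + 1) ` {x. x \<noteq> 0 \<and> cl x = a} \<inter> {x. x \<noteq> 0 \<and> cl x = b}
     = {x. x \<noteq> 1 \<and> x \<noteq> 0 \<and> cl (x - 1) = a mod 7 \<and> cl x = b mod 7}"
  proof (rule set_eqI, rule iffI)
    fix y assume "y \<in> (\<lambda>x. x + 1) ` {x. x \<noteq> 0 \<and> cl x = a} \<inter> {x. x \<noteq> 0 \<and> cl x = b}"
    thus "y \<in> {x. x \<noteq> 1 \<and> x \<noteq> 0 \<and> cl (x - 1) = a mod 7 \<and> cl x = b mod 7}" using ab by auto
  next
    fix y assume "y \<in> {x. x \<noteq> 1 \<and> x \<noteq> 0 \<and> cl (x - 1) = a mod 7 \<and> cl x = b mod 7}"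
    hence "y - 1 \<in> {x. x \<noteq> 0 \<and> cl x = a}" "y = (y - 1) + 1" "y \<in> {x. x \<noteq> 0 \<and> cl x = b}" using ab by auto
    thus "y \<in> (\<lambda>x. x + 1) ` {x. x \<noteq> 0 \<and> cl x = a} \<inter> {x. x \<noteq> 0 \<and> cl x = b}" by blast
  qed
  thus ?thesis unfolding cyc_num_def cn_def using cyc_class_eq ab by simp
qed

end

lemma card_witness: "(\<forall>x\<in>A. f x \<in> B) \<Longrightarrow> (\<forall>y\<in>B. g y \<in> A) \<Longrightarrow> (\<forall>x\<in>A. g (f x) = x)
  \<Longrightarrow> (\<forall>y\<in>B. f (g y) = y) \<Longrightarrow> card A = card B"
  by (rule bij_betw_same_card[of f], rule bij_betw_byWitness[of _ g]) auto

lemma fe: "(x::'a::field) \<noteq> 1 \<Longrightarrow> x / (x - 1) - 1 = 1 / (x - 1)"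
proof -
  assume "x \<noteq> 1" hence b: "x - 1 \<noteq> 0" by simp
  have "x / (x - 1) - 1 = x / (x - 1) - (x - 1) / (x - 1)" using b by simp
  also have "\<dots> = (x - (x - 1)) / (x - 1)" by (rule diff_divide_distrib[symmetric])
  also have "\<dots> = 1 / (x - 1)" by simp
  finally show ?thesis .
qed
lemma fn1: "(x::'a::field) \<noteq> 1 \<Longrightarrow> x / (x - 1) \<noteq> 1"
proof
  assume a: "x \<noteq> 1" "x / (x - 1) = 1"
  hence "x - 1 \<noteq> 0" by simp
  hence "x = x - 1" using a(2) by (simp add: divide_eq_eq)
  thus False by simp
qed
lemma finv: "(x::'a::field) \<noteq> 1 \<Longrightarrow> (x / (x - 1)) / (x / (x - 1) - 1) = x"
proof -
  assume a: "x \<noteq> 1" hence b: "x - 1 \<noteq> 0" by simp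
  have "(x / (x - 1)) / (1 / (x - 1)) = x" using b by simp
  thus ?thesis using fe[OF a] by simp
qed
lemma fdiv: "(y::'a::field) \<noteq> 0 \<Longrightarrow> y / y0 - 1 = (y - y0) / y0" if "y0 \<noteq> 0"
  using that by (simp add: diff_divide_distrib divide_self)
lemma fdiv1: "(y::'a::field) \<noteq> y0 \<Longrightarrow> y0 \<noteq> 0 \<Longrightarrow> y / y0 \<noteq> 1"
  by simp

context prim begin

lemma cn_sym: "cn a b = cn b a"
  unfolding cn_def
proof (rule card_witness[of _ "\<lambda>x. 1 - x" _ "\<lambda>x. 1 - x"], goal_cases)
  case 1 show ?case
  proof
    fix x :: 'a assume "x \<in> {x. x \<noteq> 1 \<and> x \<noteq> 0 \<and> cl (x - 1) = a mod 7 \<and> cl x = b mod 7}"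
    hence x: "x \<noteq> 1" "x \<noteq> 0" "cl (x - 1) = a mod 7" "cl x = b mod 7" by auto
    have c1: "cl (1 - x - 1) = cl x" using cl_neg[of x] x by simp
    have c2: "cl (1 - x) = cl (x - 1)" using cl_neg[of "x - 1"] x by simp
    show "1 - x \<in> {x. x \<noteq> 1 \<and> x \<noteq> 0 \<and> cl (x - 1) = b mod 7 \<and> cl x = a mod 7}"
      using x c1 c2 by simp
  qed
next
  case 2 show ?case
  proof
    fix x :: 'a assume "x \<in> {x. x \<noteq> 1 \<and> x \<noteq> 0 \<and> cl (x - 1) = b mod 7 \<and> cl x = a mod 7}"
    hence x: "x \<noteq> 1" "x \<noteq> 0" "cl (x - 1) = b mod 7" "cl x = a mod 7" by auto
    have c1: "cl (1 - x - 1) = cl x" using cl_neg[of x] x by simp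
    have c2: "cl (1 - x) = cl (x - 1)" using cl_neg[of "x - 1"] x by simp
    show "1 - x \<in> {x. x \<noteq> 1 \<and> x \<noteq> 0 \<and> cl (x - 1) = a mod 7 \<and> cl x = b mod 7}"
      using x c1 c2 by simp
  qed
qed auto

lemma cn_S2: "cn a b = cn ((7 - a mod 7) mod 7) ((b mod 7 + 7 - a mod 7) mod 7)"
  unfolding cn_def
proof (rule card_witness[of _ "\<lambda>x. x / (x - 1)" _ "\<lambda>x. x / (x - 1)"], goal_cases)
  case 1 show ?case
  proof
    fix x :: 'a assume "x \<in> {x. x \<noteq> 1 \<and> x \<noteq> 0 \<and> cl (x - 1) = a mod 7 \<and> cl x = b mod 7}"
    hence x: "x \<noteq> 1" "x \<noteq> 0" "cl (x - 1) = a mod 7" "cl x = b mod 7" by auto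
    have x1: "x - 1 \<noteq> 0" using x by simp
    have nz: "x / (x - 1) \<noteq> 0" using x x1 by simp
    have "cl (x / (x - 1) - 1) = (7 - a mod 7) mod 7" unfolding fe[OF x(1)] using cl_div[of 1 "x - 1"] x1 x by simp
    moreover have "cl (x / (x - 1)) = ((b mod 7 + 7 - a mod 7) mod 7) mod 7" using cl_div[of x "x - 1"] x1 x by simp
    ultimately show "x / (x - 1) \<in> {x. x \<noteq> 1 \<and> x \<noteq> 0 \<and> cl (x - 1) = ((7 - a mod 7) mod 7) mod 7 \<and> cl x = ((b mod 7 + 7 - a mod 7) mod 7) mod 7}"
      using fn1[OF x(1)] nz by simp
  qed
next
  case 2 show ?case
  proof
    fix y :: 'a assume "y \<in> {x. x \<noteq> 1 \<and> x \<noteq> 0 \<and> cl (x - 1) = ((7 - a mod 7) mod 7) mod 7 \<and> cl x = ((b mod 7 + 7 - a mod 7) mod 7) mod 7}"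
    hence y: "y \<noteq> 1" "y \<noteq> 0" "cl (y - 1) = (7 - a mod 7) mod 7" "cl y = (b mod 7 + 7 - a mod 7) mod 7" by auto
    have y1: "y - 1 \<noteq> 0" using y by simp
    have nz: "y / (y - 1) \<noteq> 0" using y y1 by simp
    have c1: "cl (y / (y - 1) - 1) = (7 - cl (y - 1)) mod 7" unfolding fe[OF y(1)] using cl_div[of 1 "y - 1"] y1 by simp
    have c2: "cl (y / (y - 1)) = (cl y + 7 - cl (y - 1)) mod 7" using cl_div[of y "y - 1"] y1 y by simp
    have "cl (y / (y - 1) - 1) = (7 - (7 - a mod 7) mod 7) mod 7" by (simp only: c1 y(3))
    also have "\<dots> = a mod 7" by (rule a3) simp
    finally have d1: "cl (y / (y - 1) - 1) = a mod 7" .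
    have "cl (y / (y - 1)) = ((b mod 7 + 7 - a mod 7) mod 7 + 7 - (7 - a mod 7) mod 7) mod 7" by (simp only: c2 y(3) y(4))
    also have "\<dots> = b mod 7" by (rule a4) simp_all
    finally have "cl (y / (y - 1)) = b mod 7" .
    with d1 show "y / (y - 1) \<in> {x. x \<noteq> 1 \<and> x \<noteq> 0 \<and> cl (x - 1) = a mod 7 \<and> cl x = b mod 7}"
      using fn1[OF y(1)] nz by simp
  qed
next
  case 3 show ?case
  proof (intro ballI)
    fix x :: 'a assume "x \<in> {x. x \<noteq> 1 \<and> x \<noteq> 0 \<and> cl (x - 1) = a mod 7 \<and> cl x = b mod 7}"
    hence "x \<noteq> 1" by blast
    thus "x / (x - 1) / (x / (x - 1) - 1) = x" by (rule finv)
  qed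
next
  case 4 show ?case
  proof (intro ballI)
    fix x :: 'a assume "x \<in> {x. x \<noteq> 1 \<and> x \<noteq> 0 \<and> cl (x - 1) = ((7 - a mod 7) mod 7) mod 7 \<and> cl x = ((b mod 7 + 7 - a mod 7) mod 7) mod 7}"
    hence "x \<noteq> 1" by blast
    thus "x / (x - 1) / (x / (x - 1) - 1) = x" by (rule finv)
  qed
qed

lemma orbit1: "(a, b) \<in> {(1,5),(5,1),(6,4),(4,6),(2,3),(3,2)} \<Longrightarrow> cn a b = cn 1 5"
  using cn_S2[of 1 5] cn_S2[of 5 1] cn_sym[of 1 5] cn_sym[of 6 4] cn_sym[of 2 3] by auto

lemma orbit2: "(a, b) \<in> {(1,3),(3,1),(6,2),(2,6),(4,5),(5,4)} \<Longrightarrow> cn a b = cn 1 3"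
  using cn_S2[of 1 3] cn_S2[of 3 1] cn_sym[of 1 3] cn_sym[of 6 2] cn_sym[of 4 5] by auto

lemma cnt: "y0 \<noteq> 0 \<Longrightarrow> A < 7 \<Longrightarrow> B < 7 \<Longrightarrow>
  card {y. y \<noteq> 0 \<and> cl y = A \<and> y - y0 \<noteq> 0 \<and> cl (y - y0) = B}
   = cn ((B + 7 - cl y0) mod 7) ((A + 7 - cl y0) mod 7)"
  unfolding cn_def
proof (rule card_witness[of _ "\<lambda>y. y / y0" _ "\<lambda>t. t * y0"], goal_cases)
  case 1 show ?case
  proof
    fix y :: 'a assume "y \<in> {y. y \<noteq> 0 \<and> cl y = A \<and> y - y0 \<noteq> 0 \<and> cl (y - y0) = B}"
    hence y: "y \<noteq> 0" "cl y = A" "y - y0 \<noteq> 0" "cl (y - y0) = B" by auto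
    have e: "y / y0 - 1 = (y - y0) / y0" using fdiv[of y0 y] 1 y(1) by blast
    have n1: "y / y0 \<noteq> 1" using 1 y by simp
    have "cl (y / y0 - 1) = (B + 7 - cl y0) mod 7" unfolding e using cl_div[of "y - y0" y0] 1 y by simp
    moreover have "cl (y / y0) = (A + 7 - cl y0) mod 7" using cl_div[of y y0] 1 y by simp
    ultimately show "y / y0 \<in> {x. x \<noteq> 1 \<and> x \<noteq> 0 \<and> cl (x - 1) = ((B + 7 - cl y0) mod 7) mod 7 \<and> cl x = ((A + 7 - cl y0) mod 7) mod 7}"
      using 1 y n1 by simp
  qed
next
  case 2 show ?case
  proof
    fix t :: 'a assume "t \<in> {x. x \<noteq> 1 \<and> x \<noteq> 0 \<and> cl (x - 1) = ((B + 7 - cl y0) mod 7) mod 7 \<and> cl x = ((A + 7 - cl y0) mod 7) mod 7}"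
    hence t: "t \<noteq> 1" "t \<noteq> 0" "cl (t - 1) = (B + 7 - cl y0) mod 7" "cl t = (A + 7 - cl y0) mod 7" by auto
    have t1: "t - 1 \<noteq> 0" using t by simp
    have e: "t * y0 - y0 = (t - 1) * y0" by (simp add: algebra_simps)
    have c1: "cl (t * y0) = (cl t + cl y0) mod 7" using cl_mult t 2 by simp
    have c2: "cl (t * y0 - y0) = (cl (t - 1) + cl y0) mod 7" unfolding e using cl_mult t1 2 by simp
    have "cl (t * y0) = A" using c1 t(4) 2 a2[of A "cl y0"] by simp
    moreover have "cl (t * y0 - y0) = B" using c2 t(3) 2 a2[of B "cl y0"] by simp
    moreover have "t * y0 - y0 \<noteq> 0" unfolding e using t1 2 by simp
    ultimately show "t * y0 \<in> {y. y \<noteq> 0 \<and> cl y = A \<and> y - y0 \<noteq> 0 \<and> cl (y - y0) = B}"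
      using t 2 by simp
  qed
next
  case 3 thus ?case by simp
next
  case 4 thus ?case by simp
qed

end



lemma z2add_comm: "z2add a b = z2add b a"
  by (cases a rule: prod_cases3, cases b rule: prod_cases3) auto
lemma z2add_zero[simp]: "z2add a z2zero = a" "z2add z2zero a = a"
  by (cases a rule: prod_cases3, auto simp: z2zero_def)+
lemma z2add_self[simp]: "z2add a a = z2zero"
  by (cases a rule: prod_cases3, auto simp: z2zero_def)
lemma z2add_eq0: "z2add w z = z2zero \<longleftrightarrow> w = z"
  by (cases w rule: prod_cases3, cases z rule: prod_cases3) (auto simp: z2zero_def)
lemma z2add_eqz: "z2add w z = z \<longleftrightarrow> w = z2zero"
  by (cases w rule: prod_cases3, cases z rule: prod_cases3) (auto simp: z2zero_def)
lemma z2add_cancel[simp]: "z2add (z2add w z) z = w"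
  by (cases w rule: prod_cases3, cases z rule: prod_cases3) auto
lemma z2add_cancel2[simp]: "z2add z (z2add w z) = w"
  by (cases w rule: prod_cases3, cases z rule: prod_cases3) auto
lemma z2add_cancel3[simp]: "z2add (z2add z w) z = w"
  by (cases w rule: prod_cases3, cases z rule: prod_cases3) auto
lemma z2add_tr: "z2add (z2add w u) (z2add v u) = z2add w v"
  by (cases w rule: prod_cases3, cases u rule: prod_cases3, cases v rule: prod_cases3) auto

lemma card_z2: "card (UNIV :: z2_3 set) = 8"
  by (simp add: UNIV_Times_UNIV[symmetric] card_cartesian_product del: UNIV_Times_UNIV)

lemma msub: "a < l \<Longrightarrow> b < (l::nat) \<Longrightarrow> (b + l - a) mod l = (if a \<le> b then b - a else b + l - a)"
proof (cases "a \<le> b")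
  case True
  assume "a < l" "b < l"
  hence e: "b + l - a = (b - a) + l" using True by simp
  have "(b + l - a) mod l = (b - a) mod l" by (simp only: e mod_add_self2)
  thus ?thesis using True \<open>b < l\<close> by simp
next
  case False
  assume "a < l" "b < l"
  thus ?thesis using False by simp
qed

lemma msub0: "a < l \<Longrightarrow> b < (l::nat) \<Longrightarrow> (b + l - a) mod l = 0 \<longleftrightarrow> a = b"
  using msub by auto

lemma mint: "a < (l::nat) \<Longrightarrow> int ((b + l - a) mod l) = (int b - int a) mod int l"
proof -
  assume a: "a < l"
  have e: "int (b + l - a) = (int b - int a) + int l" using a by simp
  have "int ((b + l - a) mod l) = int (b + l - a) mod int l" by (simp add: of_nat_mod)
  also have "\<dots> = (int b - int a) mod int l" unfolding e by simp
  finally show ?thesis .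
qed

lemma int_lt_mod: "b < (l::nat) \<Longrightarrow> int b mod int l = int b"
  by (simp add: of_nat_mod[symmetric])

lemma arith1: "a < l \<Longrightarrow> b < (l::nat) \<Longrightarrow> ((a + b) mod l + l - a) mod l = b"
proof -
  assume ab: "a < l" "b < l"
  have "int (((a + b) mod l + l - a) mod l) = (int ((a + b) mod l) - int a) mod int l" by (rule mint) fact
  also have "\<dots> = ((int a + int b) mod int l - int a) mod int l" by (simp add: of_nat_mod)
  also have "\<dots> = int b mod int l" by (simp add: mod_diff_left_eq)
  also have "\<dots> = int b" using ab by (simp add: int_lt_mod)
  finally show ?thesis by simp
qed

lemma arith2: "a < l \<Longrightarrow> b < (l::nat) \<Longrightarrow> (a + (b + l - a) mod l) mod l = b"
proof -
  assume ab: "a < l" "b < l"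
  have "int ((a + (b + l - a) mod l) mod l) = (int a + int ((b + l - a) mod l)) mod int l" by (simp add: of_nat_mod)
  also have "\<dots> = (int a + (int b - int a) mod int l) mod int l" using mint[OF ab(1)] by simp
  also have "\<dots> = int b mod int l" by (simp add: mod_add_right_eq)
  also have "\<dots> = int b" using ab by (simp add: int_lt_mod)
  finally show ?thesis by simp
qed

lemma arith3: "a < l \<Longrightarrow> b < l \<Longrightarrow> c < (l::nat) \<Longrightarrow>
  (c + l - b) mod l = ((c + l - a) mod l + l - (b + l - a) mod l) mod l"
proof -
  assume abc: "a < l" "b < l" "c < l"
  have bl: "(b + l - a) mod l < l" using abc by simp
  have "int (((c + l - a) mod l + l - (b + l - a) mod l) mod l)
     = (int ((c + l - a) mod l) - int ((b + l - a) mod l)) mod int l" by (rule mint) fact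
  also have "\<dots> = ((int c - int a) mod int l - (int b - int a) mod int l) mod int l"
    using mint[OF abc(1)] by simp
  also have "\<dots> = (int c - int b) mod int l" by (simp add: mod_diff_eq)
  also have "\<dots> = int ((c + l - b) mod l)" using mint[OF abc(2)] by simp
  finally show ?thesis by simp
qed

fun gadd :: "nat \<Rightarrow> nat \<times> z2_3 \<times> 'a::ab_group_add \<Rightarrow> nat \<times> z2_3 \<times> 'a \<Rightarrow> nat \<times> z2_3 \<times> 'a" where
  "gadd l (a, z, x) (b, w, y) = ((a + b) mod l, z2add z w, x + y)"

lemma memV: "(a, z, x) \<in> Gcar l \<longleftrightarrow> a < l" by (simp add: Gcar_def)

lemma gd_ga: "u \<in> Gcar l \<Longrightarrow> d \<in> Gcar l \<Longrightarrow> gdiff l u (gadd l u d) = (d :: nat \<times> z2_3 \<times> 'a::ab_group_add)"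
proof -
  assume a: "u \<in> Gcar l" "d \<in> Gcar l"
  obtain a1 z1 x1 where u: "u = (a1, z1, x1)" by (cases u rule: prod_cases3)
  obtain a2 z2 x2 where d: "d = (a2, z2, x2)" by (cases d rule: prod_cases3)
  have l: "a1 < l" "a2 < l" using a u d by (simp_all add: memV)
  show ?thesis unfolding u d using arith1[OF l] by simp
qed

lemma ga_gd: "u \<in> Gcar l \<Longrightarrow> w \<in> Gcar l \<Longrightarrow> gadd l u (gdiff l u w) = (w :: nat \<times> z2_3 \<times> 'a::ab_group_add)"
proof -
  assume a: "u \<in> Gcar l" "w \<in> Gcar l"
  obtain a1 z1 x1 where u: "u = (a1, z1, x1)" by (cases u rule: prod_cases3)
  obtain a2 z2 x2 where d: "w = (a2, z2, x2)" by (cases w rule: prod_cases3)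
  have l: "a1 < l" "a2 < l" using a u d by (simp_all add: memV)
  show ?thesis unfolding u d using arith2[OF l] by simp
qed

lemma gd_in: "0 < l \<Longrightarrow> gdiff l u w \<in> Gcar l"
proof -
  assume l: "0 < l"
  obtain a1 z1 x1 where u: "u = (a1, z1, x1)" by (cases u rule: prod_cases3)
  obtain a2 z2 x2 where d: "w = (a2, z2, x2)" by (cases w rule: prod_cases3)
  show ?thesis unfolding u d using l by (simp add: memV)
qed

lemma ga_in: "0 < l \<Longrightarrow> gadd l u w \<in> Gcar l"
proof -
  assume l: "0 < l"
  obtain a1 z1 x1 where u: "u = (a1, z1, x1)" by (cases u rule: prod_cases3)
  obtain a2 z2 x2 where d: "w = (a2, z2, x2)" by (cases w rule: prod_cases3)
  show ?thesis unfolding u d using l by (simp add: memV)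
qed

lemma gd_tr: "u \<in> Gcar l \<Longrightarrow> v \<in> Gcar l \<Longrightarrow> w \<in> Gcar l \<Longrightarrow>
  gdiff l v w = gdiff l (gdiff l u v) (gdiff l u (w :: nat \<times> z2_3 \<times> 'a::ab_group_add))"
proof -
  assume a: "u \<in> Gcar l" "v \<in> Gcar l" "w \<in> Gcar l"
  obtain a1 z1 x1 where u: "u = (a1, z1, x1)" by (cases u rule: prod_cases3)
  obtain a2 z2 x2 where v: "v = (a2, z2, x2)" by (cases v rule: prod_cases3)
  obtain a3 z3 x3 where w: "w = (a3, z3, x3)" by (cases w rule: prod_cases3)
  have l: "a1 < l" "a2 < l" "a3 < l" using a u v w by (simp_all add: memV)
  show ?thesis unfolding u v w using arith3[OF l] z2add_tr by simp
qed


locale gr = prim \<rho> for \<rho> :: "'a::{finite,field}" +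
  fixes l :: nat and \<pi> :: "z2_3 \<Rightarrow> nat" and c :: nat
  assumes lpos: "0 < l"
    and pinj: "\<And>z w. z \<noteq> z2zero \<Longrightarrow> w \<noteq> z2zero \<Longrightarrow> \<pi> z mod 7 = \<pi> w mod 7 \<Longrightarrow> z = w"
    and psurj: "\<And>k. k < 7 \<Longrightarrow> \<exists>z. z \<noteq> z2zero \<and> \<pi> z mod 7 = k"
    and lamhyp: "\<And>z w. z \<noteq> z2zero \<Longrightarrow> w \<noteq> z2zero \<Longrightarrow> w \<noteq> z \<Longrightarrow>
       cn ((\<pi> (z2add w z) mod 7 + 7 - \<pi> z mod 7) mod 7) ((\<pi> w mod 7 + 7 - \<pi> z mod 7) mod 7) = c"
    and lc: "8 * l = 6 * c + 2"
begin

abbreviation V :: "(nat \<times> z2_3 \<times> 'a) set" where "V \<equiv> Gcar l"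
abbreviation S :: "(nat \<times> z2_3 \<times> 'a) set" where "S \<equiv> Sset l \<rho> \<pi>"
abbreviation adj where "adj \<equiv> cay_adj l \<rho> \<pi>"

lemma memS: "(a, z, x) \<in> S \<longleftrightarrow> (a < l \<and> x = 0 \<and> (a = 0 \<longrightarrow> z \<noteq> z2zero)) \<or>
   (a = 0 \<and> z \<noteq> z2zero \<and> x \<noteq> 0 \<and> cl x = \<pi> z mod 7)"
proof -
  have 1: "(a, z, x) \<in> (S0 l :: (nat \<times> z2_3 \<times> 'a) set) \<longleftrightarrow> a < l \<and> x = 0 \<and> (a = 0 \<longrightarrow> z \<noteq> z2zero)"
    unfolding S0_def by blast
  have 2: "(a, z, x) \<in> (\<Union>w\<in>UNIV - {z2zero}. Sz \<rho> \<pi> w) \<longleftrightarrow> a = 0 \<and> z \<noteq> z2zero \<and> (\<exists>j. x = \<rho> ^ j \<and> j mod 7 = \<pi> z mod 7)"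
    by (auto simp: Sz_def)
  show ?thesis by (simp only: Sset_def Un_iff 1 2 inC_iff)
qed

lemma S_sub: "S \<subseteq> V"
proof
  fix d assume "d \<in> S"
  moreover obtain a z x where d: "d = (a, z, x)" by (cases d rule: prod_cases3)
  ultimately have "a < l" using lpos by (auto simp: memS)
  thus "d \<in> V" unfolding d by (simp add: memV)
qed

lemma transl: "u \<in> V \<Longrightarrow> card {w\<in>V. P (gdiff l u w)} = card {d\<in>V. P d}"
  by (rule card_witness[of _ "gdiff l u" _ "gadd l u"]) (auto simp: gd_in ga_in gd_ga ga_gd lpos)

lemma deg: "v \<in> V \<Longrightarrow> card {w\<in>V. adj v w} = card S"
proof -
  assume v: "v \<in> V"
  have "card {w\<in>V. adj v w} = card {w\<in>V. (\<lambda>d. d \<in> S) (gdiff l v w)}" by (simp add: cay_adj_def)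
  also have "\<dots> = card {d\<in>V. d \<in> S}" by (rule transl[OF v])
  also have "{d\<in>V. d \<in> S} = S" using S_sub by blast
  finally show ?thesis .
qed

lemma common: "u \<in> V \<Longrightarrow> v \<in> V \<Longrightarrow>
  card {w\<in>V. adj u w \<and> adj v w} = card {d\<in>V. d \<in> S \<and> gdiff l (gdiff l u v) d \<in> S}"
proof -
  assume u: "u \<in> V" and v: "v \<in> V"
  have "{w\<in>V. adj u w \<and> adj v w} = {w\<in>V. (\<lambda>d. d \<in> S \<and> gdiff l (gdiff l u v) d \<in> S) (gdiff l u w)}"
    using gd_tr[OF u v] by (auto simp: cay_adj_def)
  thus ?thesis using transl[OF u] by simp
qed

lemma adj_sym: "u \<in> V \<Longrightarrow> v \<in> V \<Longrightarrow> adj u v \<longleftrightarrow> adj v u"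
proof -
  assume a: "u \<in> V" "v \<in> V"
  obtain a1 z1 x1 where u: "u = (a1, z1, x1)" by (cases u rule: prod_cases3)
  obtain a2 z2 x2 where v: "v = (a2, z2, x2)" by (cases v rule: prod_cases3)
  have l: "a1 < l" "a2 < l" using a u v by (simp_all add: memV)
  have m1: "(a2 + l - a1) mod l = 0 \<longleftrightarrow> a1 = a2" using msub0[OF l] .
  have m2: "(a1 + l - a2) mod l = 0 \<longleftrightarrow> a1 = a2" using msub0[OF l(2,1)] by auto
  have lt: "(a2 + l - a1) mod l < l" "(a1 + l - a2) mod l < l" using lpos by simp_all
  have c: "z2add z1 z2 = z2add z2 z1" by (rule z2add_comm)
  have n: "x1 - x2 = 0 \<longleftrightarrow> x2 - x1 = 0" by auto
  have cn: "x2 - x1 \<noteq> 0 \<Longrightarrow> cl (x1 - x2) = cl (x2 - x1)" using cl_neg[of "x2 - x1"] by simp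
  show ?thesis unfolding u v cay_adj_def gdiff.simps memS m1 m2 c using lt n cn by auto
qed

lemma irrefl: "v \<in> V \<Longrightarrow> \<not> adj v v"
proof -
  obtain a1 z1 x1 where u: "v = (a1, z1, x1)" by (cases v rule: prod_cases3)
  show ?thesis unfolding u cay_adj_def gdiff.simps memS by simp
qed


lemma z2add_eqw: "z2add w z = w \<longleftrightarrow> z = z2zero"
  by (cases w rule: prod_cases3, cases z rule: prod_cases3) (auto simp: z2zero_def)

lemma S_decomp: "S = (({..<l} \<times> UNIV \<times> {0}) - {(0, z2zero, 0)}) \<union>
   (\<Union>z\<in>UNIV - {z2zero}. (\<lambda>x. (0, z, x)) ` {x. x \<noteq> 0 \<and> cl x = \<pi> z mod 7})"
proof (rule set_eqI)
  fix d :: "nat \<times> z2_3 \<times> 'a"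
  obtain a z x where d: "d = (a, z, x)" by (cases d rule: prod_cases3)
  show "d \<in> S \<longleftrightarrow> d \<in> (({..<l} \<times> UNIV \<times> {0}) - {(0, z2zero, 0)}) \<union>
   (\<Union>z\<in>UNIV - {z2zero}. (\<lambda>x. (0, z, x)) ` {x. x \<noteq> 0 \<and> cl x = \<pi> z mod 7})"
    unfolding d memS using lpos by auto
qed

lemma card_S: "card S = 8 * l - 2 + CARD('a)"
proof -
  define A :: "(nat \<times> z2_3 \<times> 'a) set" where "A = ({..<l} \<times> UNIV \<times> {0}) - {(0, z2zero, 0)}"
  define B :: "(nat \<times> z2_3 \<times> 'a) set" where "B = (\<Union>z\<in>UNIV - {z2zero}. (\<lambda>x. (0, z, x)) ` {x. x \<noteq> 0 \<and> cl x = \<pi> z mod 7})"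
  have SAB: "S = A \<union> B" unfolding A_def B_def by (rule S_decomp)
  have "card ({..<l} \<times> (UNIV :: z2_3 set) \<times> {0::'a}) = l * 8"
    by (simp add: card_cartesian_product card_z2)
  hence cA: "card A = 8 * l - 1" unfolding A_def using lpos by (simp add: card_Diff_singleton)
  have "card B = (\<Sum>z\<in>UNIV - {z2zero}. card ((\<lambda>x. (0::nat, z, x)) ` {x::'a. x \<noteq> 0 \<and> cl x = \<pi> z mod 7}))"
    unfolding B_def by (rule card_UN_disjoint) auto
  also have "\<dots> = (\<Sum>z\<in>UNIV - {z2zero}. 2 * (nn div 14))"
  proof (rule sum.cong)
    fix z assume "z \<in> UNIV - {z2zero}"
    have "card ((\<lambda>x. (0::nat, z, x)) ` {x::'a. x \<noteq> 0 \<and> cl x = \<pi> z mod 7}) = card {x::'a. x \<noteq> 0 \<and> cl x = \<pi> z mod 7}"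
      by (rule card_image) (auto simp: inj_on_def)
    also have "\<dots> = 2 * (nn div 14)" by (rule card_class) simp
    finally show "card ((\<lambda>x. (0::nat, z, x)) ` {x::'a. x \<noteq> 0 \<and> cl x = \<pi> z mod 7}) = 2 * (nn div 14)" .
  qed simp
  also have "\<dots> = 7 * (2 * (nn div 14))"
  proof -
    have "card (UNIV - {z2zero}) = 7" using card_z2 by (simp add: card_Diff_singleton)
    thus ?thesis by simp
  qed
  finally have cB: "card B = nn" using nn_eq by simp
  have "A \<inter> B = {}" unfolding A_def B_def by auto
  have fA: "finite A" unfolding A_def by simp
  have fB: "finite B" unfolding B_def by simp
  have "card S = card A + card B" unfolding SAB using fA fB \<open>A \<inter> B = {}\<close> by (rule card_Un_disjoint)
  thus ?thesis using cA cB lpos q_ge unfolding nn_def by simp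
qed

lemma lam0: assumes D: "(a0, z0, 0) \<in> S"
  shows "card {d\<in>V. d \<in> S \<and> gdiff l (a0, z0, 0) d \<in> S} = 8 * l - 2"
proof -
  have D1: "a0 < l" "a0 = 0 \<longrightarrow> z0 \<noteq> z2zero" using D by (auto simp: memS)
  have eq: "{d\<in>V. d \<in> S \<and> gdiff l (a0, z0, 0) d \<in> S} = (({..<l} \<times> UNIV \<times> {0}) - {(0, z2zero, 0)}) - {(a0, z0, 0)}"
  proof (rule set_eqI)
    fix d :: "nat \<times> z2_3 \<times> 'a"
    obtain a w y where d: "d = (a, w, y)" by (cases d rule: prod_cases3)
    have key: "\<not> (w \<noteq> z2zero \<and> z2add w z0 \<noteq> z2zero \<and> \<pi> w mod 7 = \<pi> (z2add w z0) mod 7 \<and> a0 = 0)"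
    proof
      assume H: "w \<noteq> z2zero \<and> z2add w z0 \<noteq> z2zero \<and> \<pi> w mod 7 = \<pi> (z2add w z0) mod 7 \<and> a0 = 0"
      hence "w = z2add w z0" using pinj by blast
      hence "z0 = z2zero" using z2add_eqw by metis
      thus False using H D1 by simp
    qed
    show "d \<in> {d\<in>V. d \<in> S \<and> gdiff l (a0, z0, 0) d \<in> S} \<longleftrightarrow> d \<in> (({..<l} \<times> UNIV \<times> {0}) - {(0, z2zero, 0)}) - {(a0, z0, 0)}"
    proof (cases "a < l")
      case True
      have m: "(a + l - a0) mod l = 0 \<longleftrightarrow> a0 = a" using msub0[OF D1(1) True] .
      have lt: "(a + l - a0) mod l < l" using lpos by simp
      have gS: "((a + l - a0) mod l, z2add w z0, y) \<in> S \<longleftrightarrow>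
          (y = 0 \<and> (a0 = a \<longrightarrow> w \<noteq> z0)) \<or> (a0 = a \<and> w \<noteq> z0 \<and> y \<noteq> 0 \<and> cl y = \<pi> (z2add w z0) mod 7)"
        by (simp only: memS m lt z2add_eq0) auto
      have e: "gdiff l (a0, z0, 0) (a, w, y) = ((a + l - a0) mod l, z2add w z0, y)" by simp
      show ?thesis unfolding d mem_Collect_eq e gS using True key memS[of a w y] z2add_eq0[of w z0] by (auto simp: memV)
    next
      case False thus ?thesis unfolding d by (auto simp: memV)
    qed
  qed
  have "card ({..<l} \<times> (UNIV :: z2_3 set) \<times> {0::'a}) = l * 8"
    by (simp add: card_cartesian_product card_z2)
  hence "card (({..<l} \<times> (UNIV :: z2_3 set) \<times> {0::'a}) - {(0, z2zero, 0)}) = 8 * l - 1"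
    using lpos by (simp add: card_Diff_singleton)
  moreover have "(a0, z0, 0) \<in> ({..<l} \<times> (UNIV :: z2_3 set) \<times> {0::'a}) - {(0, z2zero, 0)}" using D1 by auto
  ultimately show ?thesis unfolding eq by (simp add: card_Diff_singleton)
qed


lemma lamz: assumes z: "z \<noteq> z2zero" and y0: "y0 \<noteq> 0" "cl y0 = \<pi> z mod 7"
  shows "card {d\<in>V. d \<in> S \<and> gdiff l (0, z, y0) d \<in> S} = 8 * l - 2"
proof -
  define Y where "Y w = {y. y \<noteq> 0 \<and> cl y = \<pi> w mod 7 \<and> y - y0 \<noteq> 0 \<and> cl (y - y0) = \<pi> (z2add w z) mod 7}" for w
  define W where "W = UNIV - {z2zero, z}"
  have eq: "{d\<in>V. d \<in> S \<and> gdiff l (0, z, y0) d \<in> S} = (\<Union>w\<in>W. (\<lambda>y. (0::nat, w, y)) ` Y w)"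
  proof (rule set_eqI)
    fix d :: "nat \<times> z2_3 \<times> 'a"
    obtain a w y where d: "d = (a, w, y)" by (cases d rule: prod_cases3)
    show "d \<in> {d\<in>V. d \<in> S \<and> gdiff l (0, z, y0) d \<in> S} \<longleftrightarrow> d \<in> (\<Union>w\<in>W. (\<lambda>y. (0::nat, w, y)) ` Y w)"
    proof (cases "a < l")
      case True
      have e: "gdiff l (0, z, y0) (a, w, y) = (a, z2add w z, y - y0)" using True by simp
      have gS: "(a, z2add w z, y - y0) \<in> S \<longleftrightarrow> (y = y0 \<and> (a = 0 \<longrightarrow> w \<noteq> z)) \<or>
           (a = 0 \<and> w \<noteq> z \<and> y \<noteq> y0 \<and> cl (y - y0) = \<pi> (z2add w z) mod 7)"
        by (simp only: memS z2add_eq0) (auto simp: True)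
      have k1: "\<not> (y = 0 \<and> a = 0 \<and> w \<noteq> z \<and> cl (y - y0) = \<pi> (z2add w z) mod 7 \<and> w \<noteq> z2zero)"
      proof
        assume H: "y = 0 \<and> a = 0 \<and> w \<noteq> z \<and> cl (y - y0) = \<pi> (z2add w z) mod 7 \<and> w \<noteq> z2zero"
        have "y - y0 = - y0" using H by simp
        hence "cl (- y0) = \<pi> (z2add w z) mod 7" using H by metis
        hence "\<pi> z mod 7 = \<pi> (z2add w z) mod 7" using cl_neg[OF y0(1)] y0(2) by simp
        moreover have "z2add w z \<noteq> z2zero" using H z2add_eq0 by blast
        ultimately have "z = z2add w z" using pinj z by blast
        hence "w = z2zero" using z2add_eqz by metis
        thus False using H by simp
      qed
      have k2: "\<not> (y = y0 \<and> w \<noteq> z \<and> w \<noteq> z2zero \<and> cl y = \<pi> w mod 7)"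
      proof
        assume H: "y = y0 \<and> w \<noteq> z \<and> w \<noteq> z2zero \<and> cl y = \<pi> w mod 7"
        hence "\<pi> z mod 7 = \<pi> w mod 7" using y0 by metis
        hence "z = w" using pinj z H by blast
        thus False using H by simp
      qed
      show ?thesis unfolding d mem_Collect_eq e gS using True k1 k2 y0(1) memS[of a w y]
        by (auto simp: memV W_def Y_def)
    next
      case False thus ?thesis unfolding d using lpos by (auto simp: memV)
    qed
  qed
  have "card (\<Union>w\<in>W. (\<lambda>y. (0::nat, w, y)) ` Y w) = (\<Sum>w\<in>W. card ((\<lambda>y. (0::nat, w, y)) ` Y w))"
    by (rule card_UN_disjoint) (auto simp: W_def)
  also have "\<dots> = (\<Sum>w\<in>W. c)"
  proof (rule sum.cong)
    fix w assume w: "w \<in> W"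
    hence w': "w \<noteq> z2zero" "w \<noteq> z" by (auto simp: W_def)
    have "card ((\<lambda>y. (0::nat, w, y)) ` Y w) = card (Y w)" by (rule card_image) (auto simp: inj_on_def)
    also have "\<dots> = cn ((\<pi> (z2add w z) mod 7 + 7 - cl y0) mod 7) ((\<pi> w mod 7 + 7 - cl y0) mod 7)"
      unfolding Y_def by (rule cnt) (simp_all add: y0)
    also have "\<dots> = c" unfolding y0(2) by (rule lamhyp[OF z w'])
    finally show "card ((\<lambda>y. (0::nat, w, y)) ` Y w) = c" .
  qed simp
  also have "\<dots> = 6 * c"
  proof -
    have "card W = 6" unfolding W_def using z card_z2 by (simp add: card_Diff_subset)
    thus ?thesis by simp
  qed
  finally show ?thesis unfolding eq using lc by simp
qed

lemma lam: "u \<in> V \<Longrightarrow> v \<in> V \<Longrightarrow> adj u v \<Longrightarrow> card {w\<in>V. adj u w \<and> adj v w} = 8 * l - 2"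
proof -
  assume u: "u \<in> V" and v: "v \<in> V" and a: "adj u v"
  have D: "gdiff l u v \<in> S" using a by (simp add: cay_adj_def)
  obtain a0 z0 y0 where Dd: "gdiff l u v = (a0, z0, y0)" by (cases "gdiff l u v" rule: prod_cases3)
  have "card {w\<in>V. adj u w \<and> adj v w} = card {d\<in>V. d \<in> S \<and> gdiff l (a0, z0, y0) d \<in> S}"
    using common[OF u v] Dd by simp
  also have "\<dots> = 8 * l - 2"
  proof (cases "y0 = 0")
    case True thus ?thesis using lam0 D Dd by simp
  next
    case False
    hence "a0 = 0" "z0 \<noteq> z2zero" "cl y0 = \<pi> z0 mod 7" using D Dd by (auto simp: memS)
    thus ?thesis using lamz[of z0 y0] False by simp
  qed
  finally show ?thesis .
qed


end


context gr begin
lemma clique_adj: "u \<in> {..<l} \<times> UNIV \<times> {0} \<Longrightarrow> v \<in> {..<l} \<times> UNIV \<times> {0} \<Longrightarrow> u \<noteq> v \<Longrightarrow> adj u v"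
proof -
  assume a: "u \<in> {..<l} \<times> UNIV \<times> {0}" "v \<in> {..<l} \<times> UNIV \<times> {0}" "u \<noteq> v"
  obtain a1 z1 x1 where u: "u = (a1, z1, x1)" by (cases u rule: prod_cases3)
  obtain a2 z2 x2 where v: "v = (a2, z2, x2)" by (cases v rule: prod_cases3)
  have l: "a1 < l" "a2 < l" "x1 = 0" "x2 = 0" using a u v by auto
  have m1: "(a2 + l - a1) mod l = 0 \<longleftrightarrow> a1 = a2" using msub0[OF l(1,2)] .
  have lt: "(a2 + l - a1) mod l < l" using lpos by simp
  have ne: "a1 = a2 \<longrightarrow> z2add z2 z1 \<noteq> z2zero" using a(3) u v l z2add_eq0[of z2 z1] by auto
  show ?thesis unfolding u v cay_adj_def gdiff.simps memS m1 using lt ne l by simp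
qed

lemma clique_reg: "v \<in> V - {..<l} \<times> UNIV \<times> {0} \<Longrightarrow> card {w\<in>{..<l} \<times> UNIV \<times> {0}. adj v w} = 1"
proof -
  assume a: "v \<in> V - {..<l} \<times> UNIV \<times> {0}"
  obtain a1 z1 x1 where v: "v = (a1, z1, x1)" by (cases v rule: prod_cases3)
  have a1: "a1 < l" and x1: "x1 \<noteq> 0" using a v by (auto simp: memV)
  obtain z0 where z0: "z0 \<noteq> z2zero" "\<pi> z0 mod 7 = cl x1" using psurj[of "cl x1"] by auto
  have "{w\<in>{..<l} \<times> UNIV \<times> {0}. adj v w} = {(a1, z2add z0 z1, 0)}"
  proof (rule set_eqI)
    fix w :: "nat \<times> z2_3 \<times> 'a"
    obtain b z x where w: "w = (b, z, x)" by (cases w rule: prod_cases3)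
    show "w \<in> {w\<in>{..<l} \<times> UNIV \<times> {0}. adj v w} \<longleftrightarrow> w \<in> {(a1, z2add z0 z1, 0)}"
    proof (cases "b < l \<and> x = 0")
      case True
      have m1: "(b + l - a1) mod l = 0 \<longleftrightarrow> a1 = b" using msub0[OF a1] True by simp
      have e: "gdiff l (a1, z1, x1) (b, z, 0) = ((b + l - a1) mod l, z2add z z1, - x1)" by simp
      have cn: "cl (- x1) = cl x1" using cl_neg[OF x1] .
      have iff: "z2add z z1 \<noteq> z2zero \<and> cl x1 = \<pi> (z2add z z1) mod 7 \<longleftrightarrow> z = z2add z0 z1"
      proof
        assume h: "z2add z z1 \<noteq> z2zero \<and> cl x1 = \<pi> (z2add z z1) mod 7"
        hence "z2add z z1 = z0" using pinj[of "z2add z z1" z0] z0 by simp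
        thus "z = z2add z0 z1" by (metis z2add_cancel)
      next
        assume h: "z = z2add z0 z1"
        thus "z2add z z1 \<noteq> z2zero \<and> cl x1 = \<pi> (z2add z z1) mod 7" using z0 by simp
      qed
      show ?thesis unfolding w v mem_Collect_eq cay_adj_def using True
        by (simp only: e memS m1 cn) (use x1 iff in auto)
    next
      case False thus ?thesis unfolding w using a1 by auto
    qed
  qed
  thus ?thesis by simp
qed

lemma main: "edge_regular V adj (8 * l * CARD('a)) (8 * l - 2 + CARD('a)) (8 * l - 2) \<and>
         (\<exists>C. regular_clique V adj C \<and> card C = 8 * l)"
proof
  have fin: "finite V" by (simp add: Gcar_def)
  have cV: "card V = 8 * l * CARD('a)"
    by (simp add: Gcar_def card_cartesian_product card_z2)
  define z1 :: z2_3 where "z1 = (False, False, True)"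
  have ex: "adj (0, z2zero, 0) (0, z1, \<rho> ^ \<pi> z1)"
    unfolding cay_adj_def gdiff.simps using lpos by (simp add: memS z1_def z2zero_def)
  have inV: "(0, z2zero, 0) \<in> V" "(0, z1, \<rho> ^ \<pi> z1) \<in> V" using lpos by (simp_all add: memV)
  have ex2: "\<exists>u\<in>V. \<exists>v\<in>V. adj u v" using ex inV by blast
  have sym: "\<forall>u\<in>V. \<forall>v\<in>V. adj u v \<longleftrightarrow> adj v u" using adj_sym by blast
  have irr: "\<forall>v\<in>V. \<not> adj v v" using irrefl by blast
  have dg: "\<forall>v\<in>V. card {w\<in>V. adj v w} = 8 * l - 2 + CARD('a)" using deg card_S by simp
  have lm: "\<forall>u\<in>V. \<forall>v\<in>V. adj u v \<longrightarrow> card {w\<in>V. adj u w \<and> adj v w} = 8 * l - 2" using lam by blast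
  show "edge_regular V adj (8 * l * CARD('a)) (8 * l - 2 + CARD('a)) (8 * l - 2)"
    unfolding edge_regular_def using fin sym irr ex2 cV dg lm by (intro conjI)
next
  define C :: "(nat \<times> z2_3 \<times> 'a) set" where "C = {..<l} \<times> UNIV \<times> {0}"
  have sub: "C \<subseteq> V" unfolding C_def by (auto simp: Gcar_def)
  have cC: "card C = 8 * l" unfolding C_def by (simp add: card_cartesian_product card_z2)
  have cl1: "\<forall>u\<in>C. \<forall>v\<in>C. u \<noteq> v \<longrightarrow> adj u v" using clique_adj unfolding C_def by blast
  have cl2: "\<forall>v\<in>V - C. card {w\<in>C. adj v w} = 1" using clique_reg unfolding C_def by blast
  have "regular_clique V adj C" unfolding regular_clique_def using sub cl1 cl2 by (intro conjI exI[of _ 1]) auto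
  thus "\<exists>C. regular_clique V adj C \<and> card C = 8 * l" using cC by blast
qed

end


lemma tab1: "Psi1 (False,False,False) = 0" "Psi1 (False,False,True) = 2" "Psi1 (False,True,False) = 4"
  "Psi1 (False,True,True) = 5" "Psi1 (True,False,False) = 1" "Psi1 (True,False,True) = 6"
  "Psi1 (True,True,False) = 3" "Psi1 (True,True,True) = 0"
  by (simp_all add: Psi1_def z2zero_def)

lemma tab2: "Psi2 (False,False,False) = 0" "Psi2 (False,False,True) = 3" "Psi2 (False,True,False) = 6"
  "Psi2 (False,True,True) = 4" "Psi2 (True,False,False) = 5" "Psi2 (True,False,True) = 2"
  "Psi2 (True,True,False) = 1" "Psi2 (True,True,True) = 0"
  by (simp_all add: Psi2_def z2zero_def)

lemma psi1_orb0: "(a,b,c) \<noteq> z2zero \<Longrightarrow> (d,e,f) \<noteq> z2zero \<Longrightarrow> (d,e,f) \<noteq> (a,b,c) \<Longrightarrow>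
  ((Psi1 (z2add (d,e,f) (a,b,c)) mod 7 + 7 - Psi1 (a,b,c) mod 7) mod 7, (Psi1 (d,e,f) mod 7 + 7 - Psi1 (a,b,c) mod 7) mod 7)
    \<in> {(1,5),(5,1),(6,4),(4,6),(2,3),(3,2)}"
  by (cases a; cases b; cases c; cases d; cases e; cases f) (simp_all add: tab1 z2zero_def)

lemma psi2_orb0: "(a,b,c) \<noteq> z2zero \<Longrightarrow> (d,e,f) \<noteq> z2zero \<Longrightarrow> (d,e,f) \<noteq> (a,b,c) \<Longrightarrow>
  ((Psi2 (z2add (d,e,f) (a,b,c)) mod 7 + 7 - Psi2 (a,b,c) mod 7) mod 7, (Psi2 (d,e,f) mod 7 + 7 - Psi2 (a,b,c) mod 7) mod 7)
    \<in> {(1,3),(3,1),(6,2),(2,6),(4,5),(5,4)}"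
  by (cases a; cases b; cases c; cases d; cases e; cases f) (simp_all add: tab2 z2zero_def)

lemma psi1_inj0: "(a,b,c) \<noteq> z2zero \<Longrightarrow> (d,e,f) \<noteq> z2zero \<Longrightarrow> Psi1 (a,b,c) mod 7 = Psi1 (d,e,f) mod 7 \<Longrightarrow> (a,b,c) = (d,e,f)"
  by (cases a; cases b; cases c; cases d; cases e; cases f) (simp_all add: tab1 z2zero_def)

lemma psi2_inj0: "(a,b,c) \<noteq> z2zero \<Longrightarrow> (d,e,f) \<noteq> z2zero \<Longrightarrow> Psi2 (a,b,c) mod 7 = Psi2 (d,e,f) mod 7 \<Longrightarrow> (a,b,c) = (d,e,f)"
  by (cases a; cases b; cases c; cases d; cases e; cases f) (simp_all add: tab2 z2zero_def)

lemma psi1_orb: "z \<noteq> z2zero \<Longrightarrow> w \<noteq> z2zero \<Longrightarrow> w \<noteq> z \<Longrightarrow>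
  ((Psi1 (z2add w z) mod 7 + 7 - Psi1 z mod 7) mod 7, (Psi1 w mod 7 + 7 - Psi1 z mod 7) mod 7)
    \<in> {(1,5),(5,1),(6,4),(4,6),(2,3),(3,2)}"
  using psi1_orb0 by (cases z rule: prod_cases3, cases w rule: prod_cases3) blast

lemma psi2_orb: "z \<noteq> z2zero \<Longrightarrow> w \<noteq> z2zero \<Longrightarrow> w \<noteq> z \<Longrightarrow>
  ((Psi2 (z2add w z) mod 7 + 7 - Psi2 z mod 7) mod 7, (Psi2 w mod 7 + 7 - Psi2 z mod 7) mod 7)
    \<in> {(1,3),(3,1),(6,2),(2,6),(4,5),(5,4)}"
  using psi2_orb0 by (cases z rule: prod_cases3, cases w rule: prod_cases3) blast

lemma psi1_inj: "z \<noteq> z2zero \<Longrightarrow> w \<noteq> z2zero \<Longrightarrow> Psi1 z mod 7 = Psi1 w mod 7 \<Longrightarrow> z = w"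
  using psi1_inj0 by (cases z rule: prod_cases3, cases w rule: prod_cases3) blast

lemma psi2_inj: "z \<noteq> z2zero \<Longrightarrow> w \<noteq> z2zero \<Longrightarrow> Psi2 z mod 7 = Psi2 w mod 7 \<Longrightarrow> z = w"
  using psi2_inj0 by (cases z rule: prod_cases3, cases w rule: prod_cases3) blast
lemma psi1_surj: "k < 7 \<Longrightarrow> \<exists>z. z \<noteq> z2zero \<and> Psi1 z mod 7 = k"
proof -
  assume "k < 7"
  hence "k = 0 \<or> k = 1 \<or> k = 2 \<or> k = 3 \<or> k = 4 \<or> k = 5 \<or> k = 6" by arith
  thus ?thesis
    apply (elim disjE)
    apply (rule exI[of _ "(True, True, True)"], simp add: Psi1_def z2zero_def)
    apply (rule exI[of _ "(True, False, False)"], simp add: Psi1_def z2zero_def)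
    apply (rule exI[of _ "(False, False, True)"], simp add: Psi1_def z2zero_def)
    apply (rule exI[of _ "(True, True, False)"], simp add: Psi1_def z2zero_def)
    apply (rule exI[of _ "(False, True, False)"], simp add: Psi1_def z2zero_def)
    apply (rule exI[of _ "(False, True, True)"], simp add: Psi1_def z2zero_def)
    apply (rule exI[of _ "(True, False, True)"], simp add: Psi1_def z2zero_def)
    done
qed

lemma psi2_surj: "k < 7 \<Longrightarrow> \<exists>z. z \<noteq> z2zero \<and> Psi2 z mod 7 = k"
proof -
  assume "k < 7"
  hence "k = 0 \<or> k = 1 \<or> k = 2 \<or> k = 3 \<or> k = 4 \<or> k = 5 \<or> k = 6" by arith
  thus ?thesis
    apply (elim disjE)
    apply (rule exI[of _ "(True, True, True)"], simp add: Psi2_def z2zero_def)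
    apply (rule exI[of _ "(True, True, False)"], simp add: Psi2_def z2zero_def)
    apply (rule exI[of _ "(True, False, True)"], simp add: Psi2_def z2zero_def)
    apply (rule exI[of _ "(False, False, True)"], simp add: Psi2_def z2zero_def)
    apply (rule exI[of _ "(False, True, True)"], simp add: Psi2_def z2zero_def)
    apply (rule exI[of _ "(True, False, False)"], simp add: Psi2_def z2zero_def)
    apply (rule exI[of _ "(False, True, False)"], simp add: Psi2_def z2zero_def)
    done
qed



lemma l_arith: "0 < (c::nat) \<Longrightarrow> c mod 4 = 1 \<Longrightarrow> l = (3 * c + 1) div 4 \<Longrightarrow> 0 < l \<and> 8 * l = 6 * c + 2"
proof -
  assume a: "0 < c" "c mod 4 = 1" "l = (3 * c + 1) div 4"
  have "c = 4 * (c div 4) + 1" using a(2) div_mult_mod_eq[of c 4] by simp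
  hence "3 * c + 1 = 4 * (3 * (c div 4) + 1)" by simp
  hence "l = 3 * (c div 4) + 1" using a(3) by simp
  thus ?thesis using \<open>c = 4 * (c div 4) + 1\<close> by simp
qed

theorem theorem3p3:
  fixes \<rho> :: "'a::{finite,field}" and c l :: nat and \<pi> :: "z2_3 \<Rightarrow> nat"
  assumes "CARD('a) mod 14 = 1"
    and "primitive_element \<rho>"
    and "c > 0" and "c mod 4 = 1" and "l = (3 * c + 1) div 4"
    and "(c = cyc_num \<rho> ((CARD('a) - 1) div 14) 1 5 \<and> \<pi> = Psi1) \<or>
         (c = cyc_num \<rho> ((CARD('a) - 1) div 14) 1 3 \<and> \<pi> = Psi2)"
  shows "edge_regular (Gcar l) (cay_adj l \<rho> \<pi>)
           (8 * l * CARD('a)) (8 * l - 2 + CARD('a)) (8 * l - 2) \<and>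
         (\<exists>C. regular_clique (Gcar l) (cay_adj l \<rho> \<pi>) C \<and> card C = 8 * l)"
proof -
  interpret prim \<rho> using assms(1,2) by unfold_locales
  have L: "0 < l" "8 * l = 6 * c + 2" using l_arith[OF assms(3,4,5)] by auto
  have cyc: "(CARD('a) - 1) div 14 = nn div 14" by (simp add: nn_def)
  from assms(6) show ?thesis
  proof
    assume h: "c = cyc_num \<rho> ((CARD('a) - 1) div 14) 1 5 \<and> \<pi> = Psi1"
    hence c: "c = cn 1 5" using cyc_num_eq[of 1 5] cyc by simp
    interpret gr \<rho> l \<pi> c
    proof (unfold_locales)
      show "0 < l" by (rule L(1))
      show "\<And>z w. z \<noteq> z2zero \<Longrightarrow> w \<noteq> z2zero \<Longrightarrow> \<pi> z mod 7 = \<pi> w mod 7 \<Longrightarrow> z = w"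
        using psi1_inj h by blast
      show "\<And>k. k < 7 \<Longrightarrow> \<exists>z. z \<noteq> z2zero \<and> \<pi> z mod 7 = k" using psi1_surj h by blast
      show "\<And>z w. z \<noteq> z2zero \<Longrightarrow> w \<noteq> z2zero \<Longrightarrow> w \<noteq> z \<Longrightarrow>
       cn ((\<pi> (z2add w z) mod 7 + 7 - \<pi> z mod 7) mod 7) ((\<pi> w mod 7 + 7 - \<pi> z mod 7) mod 7) = c"
        using psi1_orb orbit1 h c by metis
      show "8 * l = 6 * c + 2" by (rule L(2))
    qed
    show ?thesis by (rule main)
  next
    assume h: "c = cyc_num \<rho> ((CARD('a) - 1) div 14) 1 3 \<and> \<pi> = Psi2"
    hence c: "c = cn 1 3" using cyc_num_eq[of 1 3] cyc by simp
    interpret gr \<rho> l \<pi> c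
    proof (unfold_locales)
      show "0 < l" by (rule L(1))
      show "\<And>z w. z \<noteq> z2zero \<Longrightarrow> w \<noteq> z2zero \<Longrightarrow> \<pi> z mod 7 = \<pi> w mod 7 \<Longrightarrow> z = w"
        using psi2_inj h by blast
      show "\<And>k. k < 7 \<Longrightarrow> \<exists>z. z \<noteq> z2zero \<and> \<pi> z mod 7 = k" using psi2_surj h by blast
      show "\<And>z w. z \<noteq> z2zero \<Longrightarrow> w \<noteq> z2zero \<Longrightarrow> w \<noteq> z \<Longrightarrow>
       cn ((\<pi> (z2add w z) mod 7 + 7 - \<pi> z mod 7) mod 7) ((\<pi> w mod 7 + 7 - \<pi> z mod 7) mod 7) = c"
        using psi2_orb orbit2 h c by metis
      show "8 * l = 6 * c + 2" by (rule L(2))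
    qed
    show ?thesis by (rule main)
  qed
qed

end
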